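(* Let $\varphi:\mathcal X\to\mathbb C^N$ be continuous and let $n=\dim_{\mathbb C}\mathcal V_{\mathrm{lin}}$, where $\mathcal V_{\mathrm{lin}}=\mathrm{Span}_{\mathbb C}\{\varphi(x)\varphi(x)^*:x\in\mathcal X\}\subseteq\mathbb C^{N\times N}$. Then there exists a point $z\in\mathcal X$ depending only on $\varphi$ such that the function $f:\mathcal X\to\mathbb R$, $f(x)=\sum_{i=1}^d\cos(2\pi(x_i-z_i))$, satisfies \[|L^{\mathrm{OPT}}_g(U)-L_{\beta f}(U)|\ge\log\Big(\frac{\beta^{d/2}}{2n+1}\Big)-\|g-\beta f\|_\infty\] for every model $g(x)=\varphi(x)^*H\varphi(x)$ with $H$ a Hermitian $N\times N$ matrix and every $\beta>0$, where $U$ denotes the uniform distribution on $\mathcal X$.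
   Context: $\mathcal X=[0,1]^d$. $\mathcal P(\mathcal X)$ is the set of probability measures on $\mathcal X$. For a measurable bounded $h:\mathcal X\to\mathbb R$ and $Q\in\mathcal P(\mathcal X)$, $L_h(Q)=\log\int_{\mathcal X}e^{h(x)}\,dQ(x)$. For $P\in\mathcal P(\mathcal X)$, the moment matrix is $\Sigma_P=\int_{\mathcal X}\varphi(x)\varphi(x)^*\,dP(x)$. With $D_{\mathrm{KL}}(P\|Q)=\int\log(dP/dQ)\,dP$, define $D^{\mathrm{OPT}}_{\mathrm{KL}}(\Sigma_P\|\Sigma_Q)=\inf\{D_{\mathrm{KL}}(\tilde P\|\tilde Q):\tilde P,\tilde Q\in\mathcal P(\mathcal X),\ \Sigma_{\tilde P}=\Sigma_P,\ \Sigma_{\tilde Q}=\Sigma_Q\}$, and $L^{\mathrm{OPT}}_g(Q)=\sup_{P\in\mathcal P(\mathcal X)}\big(\int_{\mathcal X}g\,dP-D^{\mathrm{OPT}}_{\mathrm{KL}}(\Sigma_P\|\Sigma_Q)\big)$. *)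

theory Defs
  imports "HOL-Probability.Probability"
begin

definition cube :: "(real^'d) set" where
  "cube = {x. \<forall>i. 0 \<le> x $ i \<and> x $ i \<le> 1}"

definition prob_measures :: "(real^'d) measure set" where
  "prob_measures = {P. sets P = sets (restrict_space borel cube) \<and> prob_space P}"

definition unif :: "(real^'d) measure" where
  "unif = restrict_space lborel cube"

definition Lh :: "(real^'d \<Rightarrow> real) \<Rightarrow> (real^'d) measure \<Rightarrow> real" where
  "Lh h Q = ln (\<integral>x. exp (h x) \<partial>Q)"

definition moment :: "(real^'d \<Rightarrow> complex^'n) \<Rightarrow> (real^'d) measure \<Rightarrow> complex^'n^'n" where
  "moment \<phi> P = (\<chi> i j. \<integral>x. \<phi> x $ i * cnj (\<phi> x $ j) \<partial>P)"

definition KL :: "'a measure \<Rightarrow> 'a measure \<Rightarrow> ereal" where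
  "KL P Q = (if absolutely_continuous Q P \<and> integrable P (\<lambda>x. ln (enn2real (RN_deriv Q P x)))
             then ereal (\<integral>x. ln (enn2real (RN_deriv Q P x)) \<partial>P) else \<infinity>)"

definition KL_opt :: "(real^'d \<Rightarrow> complex^'n) \<Rightarrow> complex^'n^'n \<Rightarrow> complex^'n^'n \<Rightarrow> ereal" where
  "KL_opt \<phi> SP SQ = (INF PQ \<in> {(P', Q'). P' \<in> prob_measures \<and> Q' \<in> prob_measures \<and>
       moment \<phi> P' = SP \<and> moment \<phi> Q' = SQ}. KL (fst PQ) (snd PQ))"

definition L_opt :: "(real^'d \<Rightarrow> complex^'n) \<Rightarrow> (real^'d \<Rightarrow> real) \<Rightarrow> (real^'d) measure \<Rightarrow> ereal" where
  "L_opt \<phi> g Q = (SUP P \<in> prob_measures.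
       ereal (\<integral>x. g x \<partial>P) - KL_opt \<phi> (moment \<phi> P) (moment \<phi> Q))"

text \<open>V_lin = complex span of the matrices phi(x) phi(x)^*, x in X; matrices in C^{N x N}
  are represented as vectors indexed by pairs of indices, so that vec.dim is the
  complex dimension.\<close>
definition Vlin_gen :: "(real^'d \<Rightarrow> complex^'n) \<Rightarrow> (complex^('n \<times> 'n)) set" where
  "Vlin_gen \<phi> = {(\<chi> ij. \<phi> x $ fst ij * cnj (\<phi> x $ snd ij)) | x. x \<in> cube}"

definition hermitian :: "complex^'n^'n \<Rightarrow> bool" where
  "hermitian H \<longleftrightarrow> (\<forall>i j. H $ i $ j = cnj (H $ j $ i))"

text \<open>The model g(x) = phi(x)^* H phi(x) (real-valued for Hermitian H).\<close>
definition model :: "(real^'d \<Rightarrow> complex^'n) \<Rightarrow> complex^'n^'n \<Rightarrow> real^'d \<Rightarrow> real" where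
  "model \<phi> H x = Re (\<Sum>i\<in>UNIV. \<Sum>j\<in>UNIV. cnj (\<phi> x $ i) * H $ i $ j * \<phi> x $ j)"

end

theory Submission
  imports Defs "HOL-Probability.Distributions"
begin

lemma jordan: fixes x::real assumes "0 \<le> x" "x \<le> pi/2" shows "2/pi * x \<le> sin x"
proof -
  have cvx: "convex_on {0..pi} (\<lambda>x. - sin x)"
    by (rule f''_ge0_imp_convex[where f'="\<lambda>x. - cos x" and f''="\<lambda>x. sin x"])
       (auto intro!: derivative_eq_intros simp: sin_ge_zero)
  define t where "t = 2/pi * x"
  have t: "0 \<le> t" "t \<le> 1" using assms pi_gt_zero by (auto simp: t_def field_simps)
  have "- sin ((1 - t) *\<^sub>R 0 + t *\<^sub>R (pi/2)) \<le> (1 - t) * (- sin 0) + t * (- sin (pi/2))"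
    using convex_onD[OF cvx, of t 0 "pi/2"] t pi_gt_zero by auto
  moreover have "(1 - t) *\<^sub>R 0 + t *\<^sub>R (pi/2) = x" using pi_gt_zero by (simp add: t_def)
  ultimately show ?thesis by (simp add: t_def)
qed

lemma cos_quad: fixes y::real assumes "\<bar>y\<bar> \<le> 1/2" shows "cos (2*pi*y) \<le> 1 - 8 * y^2"
proof -
  have a: "0 \<le> pi * \<bar>y\<bar>" "pi * \<bar>y\<bar> \<le> pi/2" using assms pi_gt_zero by auto
  have "2/pi * (pi * \<bar>y\<bar>) \<le> sin (pi * \<bar>y\<bar>)" by (rule jordan[OF a])
  hence b: "2 * \<bar>y\<bar> \<le> \<bar>sin (pi * y)\<bar>"
    using pi_gt_zero by (cases "y \<ge> 0") (auto simp: abs_if sin_ge_zero)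
  have "(2 * \<bar>y\<bar>)^2 \<le> (sin (pi * y))^2"
    using power_mono[OF b, of 2] by simp
  moreover have "cos (2*pi*y) = 1 - 2 * (sin (pi*y))^2"
    using cos_double_sin[of "pi*y"] by (simp add: mult.assoc)
  ultimately show ?thesis by (simp add: power2_eq_square abs_mult_self_eq)
qed

lemma shift_nn: fixes a :: real assumes [measurable]: "f \<in> borel_measurable borel"
  shows "(\<integral>\<^sup>+x. f (x + a) \<partial>lborel) = (\<integral>\<^sup>+x. f x \<partial>lborel)"
  using nn_integral_real_affine[of f 1 a] by (simp add: add.commute)

lemma gauss_nn: fixes b :: real assumes "b > 0"
  shows "(\<integral>\<^sup>+x. ennreal (exp (- b * x^2)) \<partial>lborel) = ennreal (sqrt (pi / b))"
proof -
  define \<sigma> where "\<sigma> = 1 / sqrt (2 * b)"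
  have sp: "\<sigma> > 0" using assms by (simp add: \<sigma>_def)
  have s2: "2 * \<sigma>^2 = 1 / b" using assms by (simp add: \<sigma>_def power_divide)
  have eq: "exp (- b * x^2) = sqrt (pi / b) * normal_density 0 \<sigma> x" for x
    using assms sp by (simp add: normal_density_def s2 real_sqrt_divide field_simps)
  have "(\<integral>\<^sup>+x. ennreal (normal_density 0 \<sigma> x) \<partial>lborel) = ennreal 1"
    by (subst nn_integral_eq_integral) (auto simp: integrable_normal_density[OF sp] integral_normal_density[OF sp])
  hence "(\<integral>\<^sup>+x. ennreal (sqrt (pi / b)) * ennreal (normal_density 0 \<sigma> x) \<partial>lborel) = ennreal (sqrt (pi/b))"
    by (subst nn_integral_cmult) auto
  moreover have "\<And>x. ennreal (sqrt (pi / b) * normal_density 0 \<sigma> x) = ennreal (sqrt (pi / b)) * ennreal (normal_density 0 \<sigma> x)"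
    by (rule ennreal_mult) (use assms in auto)
  ultimately show ?thesis unfolding eq by simp
qed


lemma one_dim:
  fixes c \<beta> :: real assumes c: "0 \<le> c" "c \<le> 1" and b: "\<beta> > 0"
  shows "(\<integral>\<^sup>+t. ennreal (indicator {0..1} t * exp (\<beta> * cos (2*pi*(t - c)))) \<partial>lborel)
          \<le> ennreal (exp \<beta> / sqrt \<beta>)"
proof -
  define F where "F s = exp (\<beta> * cos (2*pi*(s)))" for s
  have Fm[measurable]: "F \<in> borel_measurable borel" unfolding F_def by measurable
  have Fp: "F s \<ge> 0" for s by (simp add: F_def)
  have Fper1: "F (s - 1) = F s" for s
  proof -
    have "cos (2*pi*(s)) = cos (2*pi*(s-1) + 2*pi)" by (simp add: algebra_simps)
    also have "\<dots> = cos (2*pi*(s-1))" by (rule cos_periodic)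
    finally show ?thesis by (simp add: F_def)
  qed
  have Fper2: "F (s + 1) = F s" for s using Fper1[of "s+1"] by simp
  define A1 where "A1 = {-1/2..1/2} \<inter> {-c..1-c::real}"
  define B2 where "B2 = {1/2<..1-c::real}"
  define B3 where "B3 = {-c..<-1/2::real}"
  have "(\<integral>\<^sup>+t. ennreal (indicator {0..1} t * exp (\<beta> * cos (2*pi*(t - c)))) \<partial>lborel)
      = (\<integral>\<^sup>+t. ennreal (indicator {0..1} t * F (t - c)) \<partial>lborel)" by (simp add: F_def)
  also have "\<dots> = (\<integral>\<^sup>+s. ennreal (indicator {0..1} (s + c) * F s) \<partial>lborel)"
    using shift_nn[where f="\<lambda>t. ennreal (indicator {0..1} t * F (t - c))" and a=c] by simp
  also have "\<dots> \<le> (\<integral>\<^sup>+s. ennreal (indicator A1 s * F s) + ennreal (indicator B2 s * F (s - 1))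
        + ennreal (indicator B3 s * F (s + 1)) \<partial>lborel)"
  proof (rule nn_integral_mono)
    fix s :: real
    show "ennreal (indicator {0..1} (s + c) * F s) \<le> ennreal (indicator A1 s * F s) + ennreal (indicator B2 s * F (s - 1))
        + ennreal (indicator B3 s * F (s + 1))"
    proof (cases "s + c \<in> {0..1}")
      case True
      let ?a = "ennreal (indicator A1 s * F s)" and ?b = "ennreal (indicator B2 s * F (s - 1))"
        and ?c = "ennreal (indicator B3 s * F (s + 1))"
      have L: "ennreal (indicator {0..1} (s + c) * F s) = ennreal (F s)" using True by simp
      consider "\<bar>s\<bar> \<le> 1/2" | "s > 1/2" | "s < -1/2" by linarith
      then show ?thesis
      proof cases
        case 1
        hence "s \<in> A1" using True by (auto simp: A1_def)
        hence "?a = ennreal (F s)" by simp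
        hence "ennreal (F s) \<le> ?a + ?b" by (simp add: add_increasing2)
        thus ?thesis unfolding L by (simp add: add_increasing2)
      next
        case 2
        hence "?b = ennreal (F s)" using True by (auto simp: B2_def Fper1)
        hence "ennreal (F s) \<le> ?a + ?b" by (simp add: add_increasing)
        thus ?thesis unfolding L by (simp add: add_increasing2)
      next
        case 3
        hence "?c = ennreal (F s)" using True by (auto simp: B3_def Fper2)
        thus ?thesis unfolding L by (simp add: add_increasing)
      qed
    qed simp
  qed
  also have "\<dots> = (\<integral>\<^sup>+s. ennreal (indicator A1 s * F s) \<partial>lborel) + (\<integral>\<^sup>+s. ennreal (indicator B2 s * F (s - 1)) \<partial>lborel)
        + (\<integral>\<^sup>+s. ennreal (indicator B3 s * F (s + 1)) \<partial>lborel)"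
    by (subst nn_integral_add; (subst nn_integral_add)?) (auto simp: A1_def B2_def B3_def)
  also have "(\<integral>\<^sup>+s. ennreal (indicator B2 s * F (s - 1)) \<partial>lborel) = (\<integral>\<^sup>+s. ennreal (indicator B2 (s + 1) * F s) \<partial>lborel)"
    using shift_nn[where f="\<lambda>u. ennreal (indicator B2 (u + 1) * F u)" and a="-1"] by (simp add: B2_def)
  also have "(\<integral>\<^sup>+s. ennreal (indicator B3 s * F (s + 1)) \<partial>lborel) = (\<integral>\<^sup>+s. ennreal (indicator B3 (s - 1) * F s) \<partial>lborel)"
    using shift_nn[where f="\<lambda>u. ennreal (indicator B3 (u - 1) * F u)" and a="1"] by (simp add: B3_def)
  also have "(\<integral>\<^sup>+s. ennreal (indicator A1 s * F s) \<partial>lborel) + (\<integral>\<^sup>+s. ennreal (indicator B2 (s + 1) * F s) \<partial>lborel)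
        + (\<integral>\<^sup>+s. ennreal (indicator B3 (s - 1) * F s) \<partial>lborel)
      = (\<integral>\<^sup>+s. ennreal (indicator A1 s * F s) + ennreal (indicator B2 (s + 1) * F s)
        + ennreal (indicator B3 (s - 1) * F s) \<partial>lborel)"
    by (subst nn_integral_add; (subst nn_integral_add)?) (auto simp: A1_def B2_def B3_def)
  also have "\<dots> \<le> (\<integral>\<^sup>+s. ennreal (indicator {-1/2..1/2} s * F s) \<partial>lborel)"
  proof (rule nn_integral_mono_AE)
    have "AE s in lborel. s \<noteq> -c" "AE s in lborel. s \<noteq> 1 - c" by (rule AE_lborel_singleton)+
    then show "AE s in lborel. ennreal (indicator A1 s * F s) + ennreal (indicator B2 (s + 1) * F s)
        + ennreal (indicator B3 (s - 1) * F s) \<le> ennreal (indicator {-1/2..1/2} s * F s)"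
    proof (eventually_elim)
      case (elim s)
      have i: "indicator A1 s + indicator B2 (s + 1) + indicator B3 (s - 1) \<le> (indicator {-1/2..1/2} s :: real)"
        using elim c by (auto simp: A1_def B2_def B3_def indicator_def)
      have "ennreal (indicator A1 s * F s) + ennreal (indicator B2 (s + 1) * F s) + ennreal (indicator B3 (s - 1) * F s)
          = ennreal ((indicator A1 s + indicator B2 (s + 1) + indicator B3 (s - 1)) * F s)"
        using Fp[of s] by (simp add: ennreal_plus[symmetric] distrib_right del: ennreal_plus)
      also have "\<dots> \<le> ennreal (indicator {-1/2..1/2} s * F s)"
        using i Fp[of s] by (intro ennreal_leI mult_right_mono) auto
      finally show ?case .
    qed
  qed
  also have "\<dots> \<le> (\<integral>\<^sup>+s. ennreal (exp \<beta>) * ennreal (exp (- (8 * \<beta>) * s^2)) \<partial>lborel)"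
  proof (rule nn_integral_mono)
    fix s :: real
    show "ennreal (indicator {-1/2..1/2} s * F s) \<le> ennreal (exp \<beta>) * ennreal (exp (- (8 * \<beta>) * s^2))"
    proof (cases "\<bar>s\<bar> \<le> 1/2")
      case True
      have "\<beta> * cos (2*pi*(s)) \<le> \<beta> * (1 - 8 * s^2)" using cos_quad[OF True] b by simp
      hence "F s \<le> exp \<beta> * exp (- (8 * \<beta>) * s^2)"
        unfolding F_def by (simp add: exp_add[symmetric] algebra_simps)
      thus ?thesis using True by (simp add: ennreal_mult'[symmetric] indicator_def abs_le_iff)
    qed (auto simp: indicator_def abs_le_iff)
  qed
  also have "\<dots> = ennreal (exp \<beta>) * ennreal (sqrt (pi / (8 * \<beta>)))"
    using gauss_nn[of "8*\<beta>"] b by (subst nn_integral_cmult) auto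
  also have "\<dots> \<le> ennreal (exp \<beta> / sqrt \<beta>)"
  proof -
    have "sqrt (pi / (8 * \<beta>)) \<le> 1 / sqrt \<beta>"
    proof -
      have "sqrt (pi / (8 * \<beta>)) = sqrt (pi / 8) / sqrt \<beta>" by (simp add: real_sqrt_divide real_sqrt_mult)
      moreover have "sqrt (pi / 8) \<le> 1" using pi_less_4 by simp
      ultimately show ?thesis using b by (simp add: divide_right_mono)
    qed
    hence "exp \<beta> * sqrt (pi / (8 * \<beta>)) \<le> exp \<beta> * (1 / sqrt \<beta>)" by (intro mult_left_mono) auto
    hence "exp \<beta> * sqrt (pi / (8 * \<beta>)) \<le> exp \<beta> / sqrt \<beta>" by simp
    thus ?thesis by (simp add: ennreal_mult'[symmetric] ennreal_leI)
  qed
  finally show ?thesis .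
qed


lemma cube_cbox: "(cube :: (real^'d) set) = cbox 0 (vec 1)"
  by (auto simp: cube_def mem_box_cart)

lemma compact_cube: "compact (cube :: (real^'d) set)"
  unfolding cube_cbox by simp

lemma cube_borel[measurable]: "(cube :: (real^'d) set) \<in> sets borel"
  unfolding cube_cbox by simp

lemma cube_lborel[measurable]: "(cube :: (real^'d) set) \<in> sets lborel"
  by simp

lemma Basis_real_vec: "(Basis :: (real^'d) set) = range (\<lambda>i. axis i 1)"
  by (auto simp: Basis_vec_def)

lemma emeasure_cube: "emeasure lborel (cube :: (real^'d) set) = 1"
proof -
  have "emeasure lborel (cube :: (real^'d) set) = (\<Prod>b\<in>Basis. (vec 1 - 0) \<bullet> (b::real^'d))"
    unfolding cube_cbox by (rule emeasure_lborel_cbox) (auto simp: Basis_real_vec inner_axis)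
  also have "(\<Prod>b\<in>Basis. (vec 1 - 0) \<bullet> (b::real^'d)) = 1" by (intro prod.neutral) (auto simp: Basis_real_vec inner_axis)
  finally show ?thesis by simp
qed

lemma sets_unif: "sets (unif :: (real^'d) measure) = sets (restrict_space borel cube)"
  unfolding unif_def by (simp add: sets_restrict_space)

lemma space_unif: "space (unif :: (real^'d) measure) = cube"
  unfolding unif_def by (simp add: space_restrict_space)

lemma prob_space_unif: "prob_space (unif :: (real^'d) measure)"
  unfolding unif_def
  by (rule prob_spaceI) (simp add: space_restrict_space emeasure_restrict_space emeasure_cube)

lemma unif_in: "(unif :: (real^'d) measure) \<in> prob_measures"
  unfolding prob_measures_def using sets_unif prob_space_unif by blast



lemma nn_bound:
  fixes z :: "real^'d" and \<beta> :: real assumes z: "z \<in> cube" and b: "\<beta> > 0"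
  shows "(\<integral>\<^sup>+x. ennreal (indicator cube x * exp (\<beta> * (\<Sum>i\<in>UNIV. cos (2*pi*(x$i - z$i))))) \<partial>lborel)
     \<le> ennreal ((exp \<beta> / sqrt \<beta>) ^ CARD('d))"
proof -
  define g where "g b t = ennreal (indicator {0..1} t * exp (\<beta> * cos (2*pi*(t - z \<bullet> b))))" for b :: "real^'d" and t :: real
  have eq: "ennreal (indicator cube x * exp (\<beta> * (\<Sum>i\<in>UNIV. cos (2*pi*(x$i - z$i)))))
      = (\<Prod>b\<in>Basis. g b (x \<bullet> b))" for x :: "real^'d"
  proof -
    have "(\<Prod>b\<in>Basis. g b (x \<bullet> b)) = (\<Prod>i\<in>UNIV. g (axis i 1) (x $ i))"
      unfolding Basis_real_vec
      by (subst prod.reindex) (auto simp: inj_on_def axis_eq_axis inner_axis)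
    also have "\<dots> = ennreal (\<Prod>i\<in>UNIV. indicator {0..1} (x $ i) * exp (\<beta> * cos (2*pi*(x$i - z$i))))"
      unfolding g_def by (subst prod_ennreal) (auto simp: inner_axis)
    also have "(\<Prod>i\<in>UNIV. indicator {0..1} (x $ i) * exp (\<beta> * cos (2*pi*(x$i - z$i))))
       = (\<Prod>i\<in>UNIV. indicator {0..1} (x $ i)) * (\<Prod>i\<in>UNIV. exp (\<beta> * cos (2*pi*(x$i - z$i))))"
      by (rule prod.distrib)
    also have "(\<Prod>i\<in>UNIV. exp (\<beta> * cos (2*pi*(x$i - z$i)))) = exp (\<beta> * (\<Sum>i\<in>UNIV. cos (2*pi*(x$i - z$i))))"
      by (simp add: exp_sum sum_distrib_left)
    also have "(\<Prod>i\<in>UNIV. indicator {0..1} (x $ i)) = (indicator cube x :: real)"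
      by (auto simp: indicator_def cube_def prod_zero_iff)
    finally show ?thesis by simp
  qed
  have "(\<integral>\<^sup>+x. ennreal (indicator cube x * exp (\<beta> * (\<Sum>i\<in>UNIV. cos (2*pi*(x$i - z$i))))) \<partial>lborel)
      = (\<integral>\<^sup>+x. (\<Prod>b\<in>Basis. g b (x \<bullet> b)) \<partial>lborel)" unfolding eq ..
  also have "\<dots> = (\<Prod>b\<in>Basis. (\<integral>\<^sup>+t. g b t \<partial>lborel))"
    by (rule nn_integral_lborel_prod) (auto simp: g_def)
  also have "\<dots> \<le> (\<Prod>b\<in>(Basis::(real^'d) set). ennreal (exp \<beta> / sqrt \<beta>))"
  proof (rule prod_mono_ennreal)
    fix b :: "real^'d" assume "b \<in> Basis"
    then obtain i where bi: "b = axis i 1" by (auto simp: Basis_real_vec)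
    have "0 \<le> z \<bullet> b" "z \<bullet> b \<le> 1" using z by (auto simp: bi inner_axis cube_def)
    thus "(\<integral>\<^sup>+t. g b t \<partial>lborel) \<le> ennreal (exp \<beta> / sqrt \<beta>)"
      unfolding g_def using one_dim[of "z \<bullet> b" \<beta>] b by simp
  qed
  also have "\<dots> = ennreal ((exp \<beta> / sqrt \<beta>) ^ CARD('d))"
    using b by (subst prod_ennreal) (auto simp: Basis_real_vec card_image inj_on_def axis_eq_axis)
  finally show ?thesis .
qed


lemma meas_f[measurable]: "(\<lambda>x::real^'d. exp (\<beta> * (\<Sum>i\<in>UNIV. cos (2*pi*(x$i - z$i))))) \<in> borel_measurable borel"
  by measurable

lemma Lh_bound:
  fixes z :: "real^'d" and \<beta> :: real assumes z: "z \<in> cube" and b: "\<beta> > 0"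
  shows "Lh (\<lambda>x. \<beta> * (\<Sum>i\<in>UNIV. cos (2*pi*(x$i - z$i)))) unif \<le> \<beta> * CARD('d) - (CARD('d)/2) * ln \<beta>"
proof -
  let ?h = "\<lambda>x::real^'d. exp (\<beta> * (\<Sum>i\<in>UNIV. cos (2*pi*(x$i - z$i))))"
  interpret P: prob_space "unif :: (real^'d) measure" by (rule prob_space_unif)
  have hm: "?h \<in> borel_measurable unif"
    unfolding unif_def by (rule measurable_restrict_space1) (simp add: measurable_lborel1)
  have hb: "?h x \<le> exp (\<beta> * CARD('d))" for x
  proof -
    have "(\<Sum>i\<in>UNIV. cos (2*pi*(x$i - z$i))) \<le> (\<Sum>i\<in>(UNIV::'d set). 1)" by (intro sum_mono) auto
    thus ?thesis using b by (simp add: mult_left_mono)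
  qed
  have hl: "exp (- \<beta> * CARD('d)) \<le> ?h x" for x
  proof -
    have "(\<Sum>i\<in>(UNIV::'d set). -1) \<le> (\<Sum>i\<in>UNIV. cos (2*pi*(x$i - z$i)))" by (intro sum_mono) auto
    hence "\<beta> * (- CARD('d)) \<le> \<beta> * (\<Sum>i\<in>UNIV. cos (2*pi*(x$i - z$i)))" using b by (intro mult_left_mono) auto
    thus ?thesis by simp
  qed
  have hi: "integrable unif ?h"
    by (rule P.integrable_const_bound[where B="exp (\<beta> * CARD('d))"]) (use hb hm in auto)
  have pos: "0 < (\<integral>x. ?h x \<partial>unif)"
  proof -
    define c where "c = exp (- \<beta> * CARD('d))"
    have c: "c > 0" by (simp add: c_def)
    have "(\<integral>x. c \<partial>(unif::(real^'d) measure)) = c" using P.prob_space by simp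
    moreover have "(\<integral>x. c \<partial>(unif::(real^'d) measure)) \<le> (\<integral>x. ?h x \<partial>unif)" by (rule integral_mono) (use hi hl in \<open>auto simp: c_def\<close>)
    ultimately show ?thesis using c by linarith
  qed
  have "(\<integral>x. ?h x \<partial>unif) = (\<integral>x. indicator cube x *\<^sub>R ?h x \<partial>lborel)"
    unfolding unif_def by (rule integral_restrict_space) simp
  also have "\<dots> = enn2real (\<integral>\<^sup>+x. ennreal (indicator cube x * ?h x) \<partial>lborel)"
    by (subst integral_eq_nn_integral) auto
  also have "\<dots> \<le> (exp \<beta> / sqrt \<beta>) ^ CARD('d)"
  proof -
    have "(\<integral>\<^sup>+x. ennreal (indicator cube x * ?h x) \<partial>lborel) \<le> ennreal ((exp \<beta> / sqrt \<beta>) ^ CARD('d))"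
      by (rule nn_bound[OF z b])
    thus ?thesis using b by (simp add: enn2real_leI)
  qed
  finally have le: "(\<integral>x. ?h x \<partial>unif) \<le> (exp \<beta> / sqrt \<beta>) ^ CARD('d)" .
  have "Lh (\<lambda>x. \<beta> * (\<Sum>i\<in>UNIV. cos (2*pi*(x$i - z$i)))) unif = ln (\<integral>x. ?h x \<partial>unif)"
    by (simp add: Lh_def)
  also have "\<dots> \<le> ln ((exp \<beta> / sqrt \<beta>) ^ CARD('d))" using pos le by simp
  also have "\<dots> = CARD('d) * (\<beta> - ln \<beta> / 2)"
    using b by (simp add: ln_realpow ln_div ln_sqrt)
  finally show ?thesis by (simp add: algebra_simps)
qed


lemma discrete_rep:
  fixes \<Phi> :: "'b \<Rightarrow> 'a::euclidean_space" and C :: "'b set"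
  assumes M: "M \<in> convex hull (\<Phi> ` C)"
  shows "\<exists>p::'b pmf. \<exists>T z. finite T \<and> T \<subseteq> C \<and> set_pmf p \<subseteq> T \<and> (\<Sum>x\<in>T. pmf p x *\<^sub>R \<Phi> x) = M
     \<and> z \<in> C \<and> 1 \<le> pmf p z * (aff_dim (\<Phi> ` C) + 1)"
proof -
  obtain S where S: "finite S" "S \<subseteq> \<Phi> ` C" "card S \<le> aff_dim (\<Phi> ` C) + 1" "M \<in> convex hull S"
    using M caratheodory_aff_dim[of "\<Phi> ` C"] by blast
  obtain u where u: "\<forall>x\<in>S. 0 \<le> u x" "sum u S = 1" "(\<Sum>x\<in>S. u x *\<^sub>R x) = M"
    using S(4) convex_hull_finite[OF S(1)] by blast
  have Sne: "S \<noteq> {}" using u(2) by auto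
  have "Max (u ` S) \<in> u ` S" using S(1) Sne by (intro Max_in) auto
  then obtain y0 where y0S: "y0 \<in> S" and y0M: "u y0 = Max (u ` S)" by auto
  have y0: "y0 \<in> S" "\<And>y. y \<in> S \<Longrightarrow> u y \<le> u y0"
    using y0S y0M S(1) by auto
  have "1 = sum u S" using u by simp
  also have "\<dots> \<le> of_nat (card S) * u y0" using sum_bounded_above[of S u "u y0"] y0 by simp
  finally have c1: "1 \<le> real (card S) * u y0" .
  have u0: "0 \<le> u y0" using u y0 by auto
  have "real (card S) \<le> real_of_int (aff_dim (\<Phi> ` C) + 1)" using S(3) by linarith
  hence c2: "1 \<le> u y0 * real_of_int (aff_dim (\<Phi> ` C) + 1)"
    using c1 u0 by (smt (verit) mult.commute mult_left_mono)
  define t where "t = inv_into C \<Phi>"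
  have t: "\<And>y. y \<in> S \<Longrightarrow> t y \<in> C \<and> \<Phi> (t y) = y"
    using S(2) unfolding t_def by (auto intro: inv_into_into f_inv_into_f)
  have tinj: "inj_on t S" by (metis inj_onI t)
  define T where "T = t ` S"
  have T: "finite T" "T \<subseteq> C" using S(1) t by (auto simp: T_def)
  define f where "f x = (if x \<in> T then u (\<Phi> x) else 0)" for x
  have fnn: "\<And>x. 0 \<le> f x" using u t by (auto simp: f_def T_def)
  have sumT: "(\<Sum>x\<in>T. g (\<Phi> x)) = (\<Sum>y\<in>S. g y)" for g :: "'a \<Rightarrow> 'c::comm_monoid_add"
    unfolding T_def by (subst sum.reindex[OF tinj]) (auto intro!: sum.cong simp: t)
  have "(\<integral>\<^sup>+x. ennreal (f x) \<partial>count_space UNIV) = (\<Sum>x\<in>T. ennreal (f x))"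
    by (rule nn_integral_count_space') (use T in \<open>auto simp: f_def\<close>)
  also have "\<dots> = ennreal (\<Sum>x\<in>T. f x)" using fnn by (simp add: sum_ennreal)
  also have "(\<Sum>x\<in>T. f x) = (\<Sum>x\<in>T. u (\<Phi> x))" by (simp add: f_def)
  also have "\<dots> = 1" using sumT[of u] u by simp
  finally have f1: "(\<integral>\<^sup>+x. ennreal (f x) \<partial>count_space UNIV) = 1" by simp
  define p where "p = embed_pmf f"
  have pmfp: "pmf p x = f x" for x unfolding p_def by (rule pmf_embed_pmf[OF fnn f1])
  have setp: "set_pmf p \<subseteq> T" unfolding p_def by (subst set_embed_pmf[OF fnn f1]) (auto simp: f_def)
  have "(\<Sum>x\<in>T. pmf p x *\<^sub>R \<Phi> x) = (\<Sum>x\<in>T. u (\<Phi> x) *\<^sub>R \<Phi> x)" by (simp add: pmfp f_def)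
  also have "\<dots> = M" using sumT[of "\<lambda>y. u y *\<^sub>R y"] u by simp
  finally have sM: "(\<Sum>x\<in>T. pmf p x *\<^sub>R \<Phi> x) = M" .
  have z: "t y0 \<in> C" "pmf p (t y0) = u y0" using t[OF y0(1)] y0(1) by (auto simp: pmfp f_def T_def)
  show ?thesis
    apply (rule exI[of _ p], rule exI[of _ T], rule exI[of _ "t y0"])
    using T setp sM z c2 by simp
qed


definition Phi :: "(real^'d \<Rightarrow> complex^'n) \<Rightarrow> real^'d \<Rightarrow> complex^'n^'n" where
  "Phi \<phi> x = (\<chi> i j. \<phi> x $ i * cnj (\<phi> x $ j))"

lemma cont_Phi: "continuous_on cube \<phi> \<Longrightarrow> continuous_on cube (Phi \<phi>)"
  unfolding Phi_def by (intro continuous_intros) auto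

lemma cont_meas_unif:
  fixes h :: "real^'d \<Rightarrow> 'b::{banach,second_countable_topology}"
  assumes "continuous_on cube h" shows "h \<in> borel_measurable unif"
proof -
  have "h \<in> borel_measurable (restrict_space borel cube)"
    by (rule borel_measurable_continuous_on_restrict[OF assms])
  thus ?thesis using measurable_cong_sets[OF sets_unif refl] by blast
qed

lemma cont_integrable:
  fixes h :: "real^'d \<Rightarrow> 'b::{banach,second_countable_topology}"
  assumes c: "continuous_on cube h" shows "integrable unif h"
proof -
  interpret P: prob_space "unif :: (real^'d) measure" by (rule prob_space_unif)
  have "compact (h ` cube)" by (rule compact_continuous_image[OF c compact_cube])
  then obtain B where B: "\<forall>x\<in>cube. norm (h x) \<le> B"
    using compact_imp_bounded[of "h ` cube"] by (auto simp: bounded_iff)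
  show ?thesis
    by (rule P.integrable_const_bound[where B=B]) (use B cont_meas_unif[OF c] in \<open>auto simp: space_unif\<close>)
qed

lemma moment_Phi: "moment \<phi> P = (\<chi> i j. \<integral>x. Phi \<phi> x $ i $ j \<partial>P)"
  by (simp add: moment_def Phi_def)

lemma moment_in_hull:
  fixes \<phi> :: "real^'d \<Rightarrow> complex^'n"
  assumes c: "continuous_on cube \<phi>"
  shows "moment \<phi> unif \<in> convex hull (Phi \<phi> ` cube)"
proof (rule ccontr)
  interpret P: prob_space "unif :: (real^'d) measure" by (rule prob_space_unif)
  let ?S = "convex hull (Phi \<phi> ` cube)"
  let ?M = "moment \<phi> (unif :: (real^'d) measure)"
  assume nin: "?M \<notin> ?S"
  have "compact ?S"
    by (intro compact_convex_hull compact_continuous_image cont_Phi c compact_cube)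
  then obtain a b where ab: "inner a ?M < b" "\<forall>x\<in>?S. inner a x > b"
    using separating_hyperplane_closed_point[of ?S ?M] nin compact_imp_closed by auto
  have ci: "continuous_on cube (\<lambda>x. Phi \<phi> x $ i $ j)" for i j
    by (intro continuous_intros cont_Phi c)
  have ii: "integrable unif (\<lambda>x. Phi \<phi> x $ i $ j)" for i j by (rule cont_integrable[OF ci])
  have "inner a ?M = (\<Sum>i\<in>UNIV. \<Sum>j\<in>UNIV. inner (a $ i $ j) (\<integral>x. Phi \<phi> x $ i $ j \<partial>unif))"
    by (simp add: moment_Phi inner_vec_def)
  also have "\<dots> = (\<Sum>i\<in>UNIV. \<Sum>j\<in>UNIV. (\<integral>x. inner (a $ i $ j) (Phi \<phi> x $ i $ j) \<partial>unif))"
    using ii by simp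
  also have "\<dots> = (\<integral>x. (\<Sum>i\<in>UNIV. \<Sum>j\<in>UNIV. inner (a $ i $ j) (Phi \<phi> x $ i $ j)) \<partial>unif)"
    using ii by simp
  also have "\<dots> = (\<integral>x. inner a (Phi \<phi> x) \<partial>unif)"
    by (simp add: inner_vec_def)
  finally have eq: "inner a ?M = (\<integral>x. inner a (Phi \<phi> x) \<partial>unif)" .
  have "b = (\<integral>x. b \<partial>(unif :: (real^'d) measure))" using P.prob_space by simp
  also have "\<dots> \<le> (\<integral>x. inner a (Phi \<phi> x) \<partial>unif)"
  proof (rule integral_mono)
    show "integrable unif (\<lambda>x. inner a (Phi \<phi> x))"
      by (intro cont_integrable continuous_intros cont_Phi c)
    fix x assume "x \<in> space (unif :: (real^'d) measure)"
    hence "Phi \<phi> x \<in> ?S" by (auto simp: space_unif intro: hull_inc)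
    thus "b \<le> inner a (Phi \<phi> x)" using ab(2) by auto
  qed auto
  finally show False using eq ab(1) by simp
qed


lemma scale_decomp: "(c::complex) *s (x::complex^'m) = Re c *\<^sub>R x + Im c *\<^sub>R (\<i> *s x)"
  by (simp add: vec_eq_iff complex_eq_iff)

lemma linear_J: "linear (\<lambda>x::complex^'m. \<i> *s x)"
  by (rule linearI) (simp_all add: vec_eq_iff scaleR_conv_of_real algebra_simps)

lemma real_dim_le: fixes V :: "(complex^'m) set" shows "dim V \<le> 2 * vec.dim V"
proof -
  obtain B where B: "B \<subseteq> V" "vec.independent B" "V \<subseteq> vec.span B" "card B = vec.dim V"
    using vec.basis_exists[of V] by blast
  have fB: "finite B" using B(2) by (rule vec.finiteI_independent)
  define J where "J = (\<lambda>x::complex^'m. \<i> *s x)"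
  have lJ: "linear J" unfolding J_def by (rule linear_J)
  define W where "W = B \<union> J ` B"
  have JW: "J ` W \<subseteq> span W"
  proof
    fix y assume "y \<in> J ` W"
    then obtain x where x: "x \<in> W" "y = J x" by auto
    show "y \<in> span W"
    proof (cases "x \<in> B")
      case True thus ?thesis using x by (auto simp: W_def intro: span_base)
    next
      case False
      then obtain b where b: "b \<in> B" "x = J b" using x by (auto simp: W_def)
      have "y = - b" using x b by (simp add: J_def vec_eq_iff)
      thus ?thesis using b by (auto simp: W_def intro: span_neg span_base)
    qed
  qed
  have Jspan: "J x \<in> span W" if "x \<in> span W" for x
  proof -
    have "J x \<in> J ` span W" using that by auto
    also have "J ` span W = span (J ` W)" by (rule span_linear_image[OF lJ, symmetric])
    also have "\<dots> \<subseteq> span W" using JW by (metis span_mono span_span)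
    finally show ?thesis .
  qed
  have sub: "vec.subspace (span W)"
    unfolding vec.subspace_def
  proof (intro conjI ballI allI)
    show "0 \<in> span W" by (rule span_zero)
    fix x y assume "x \<in> span W" "y \<in> span W" thus "x + y \<in> span W" by (rule span_add)
  next
    fix c :: complex and x assume x: "x \<in> span W"
    have "c *s x = Re c *\<^sub>R x + Im c *\<^sub>R J x" unfolding J_def by (rule scale_decomp)
    also have "\<dots> \<in> span W" using x Jspan[OF x] by (intro span_add span_scale)
    finally show "c *s x \<in> span W" .
  qed
  have "vec.span B \<subseteq> span W" by (rule vec.span_minimal) (use sub in \<open>auto simp: W_def intro: span_base\<close>)
  hence "V \<subseteq> span W" using B(3) by auto
  hence "dim V \<le> card W" by (rule dim_le_card) (use fB in \<open>simp add: W_def\<close>)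
  also have "card W \<le> card B + card (J ` B)" unfolding W_def by (rule card_Un_le)
  also have "card (J ` B) \<le> card B" by (rule card_image_le[OF fB])
  finally show ?thesis using B(4) by simp
qed

definition iota :: "complex^'n^'n \<Rightarrow> complex^('n \<times> 'n)" where
  "iota M = (\<chi> ij. M $ fst ij $ snd ij)"

lemma linear_iota: "linear iota"
  by (rule linearI) (simp_all add: iota_def vec_eq_iff)

lemma inj_iota: "inj iota"
proof (rule injI)
  fix M N :: "complex^'n^'n" assume a: "iota M = iota N"
  show "M = N"
  proof (rule vec_eq_iff[THEN iffD2], rule allI, rule vec_eq_iff[THEN iffD2], rule allI)
    fix i j
    have "iota M $ (i, j) = iota N $ (i, j)" using a by simp
    thus "M $ i $ j = N $ i $ j" by (simp add: iota_def)
  qed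
qed

lemma Vlin_iota: "Vlin_gen \<phi> = iota ` Phi \<phi> ` cube"
proof -
  have "Vlin_gen \<phi> = (\<lambda>x. iota (Phi \<phi> x)) ` cube"
    by (auto simp: Vlin_gen_def iota_def Phi_def)
  thus ?thesis by (simp add: image_image)
qed

lemma aff_dim_bound: "aff_dim (Phi \<phi> ` cube) \<le> 2 * int (vec.dim (Vlin_gen \<phi>))"
proof -
  have "aff_dim (Phi \<phi> ` cube) = aff_dim (Vlin_gen \<phi>)"
    unfolding Vlin_iota by (rule aff_dim_injective_linear_image[OF linear_iota inj_iota, symmetric])
  also have "\<dots> \<le> aff_dim (span (Vlin_gen \<phi>))" by (rule aff_dim_subset[OF span_superset])
  also have "\<dots> = int (dim (Vlin_gen \<phi>))" by (simp add: aff_dim_subspace)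
  also have "\<dots> \<le> 2 * int (vec.dim (Vlin_gen \<phi>))" using real_dim_le[of "Vlin_gen \<phi>"] by linarith
  finally show ?thesis .
qed


lemma discrete_Q:
  fixes p :: "(real^'d) pmf" and z :: "real^'d"
  assumes T: "finite T" "T \<subseteq> cube" "set_pmf p \<subseteq> T" and z: "z \<in> cube" and w: "pmf p z > 0"
  defines "N \<equiv> restrict_space borel (cube :: (real^'d) set)"
  defines "Q \<equiv> distr (measure_pmf p) N (\<lambda>x. if x \<in> cube then x else z)"
  defines "P \<equiv> return N z"
  shows "Q \<in> prob_measures" "P \<in> prob_measures" "KL P Q = ereal (- ln (pmf p z))"
    "\<And>g::real^'d \<Rightarrow> 'b::{banach,second_countable_topology}. g \<in> borel_measurable N \<Longrightarrow> (\<integral>x. g x \<partial>Q) = (\<Sum>x\<in>T. pmf p x *\<^sub>R g x)"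
    "\<And>g::real^'d \<Rightarrow> 'b::{banach,second_countable_topology}. g \<in> borel_measurable N \<Longrightarrow> (\<integral>x. g x \<partial>P) = g z"
proof -
  define h where "h = (\<lambda>x::real^'d. if x \<in> cube then x else z)"
  have Qh: "Q = distr (measure_pmf p) N h" by (simp add: Q_def h_def)
  have spN: "space N = cube" by (simp add: N_def space_restrict_space)
  have hm: "h \<in> measurable (measure_pmf p) N" using z by (auto simp: h_def spN)
  have sQ: "sets Q = sets N" by (simp add: Qh)
  have sP: "sets P = sets N" by (simp add: P_def)
  have zsp: "z \<in> space N" using z spN by simp
  show Qin: "Q \<in> prob_measures"
    unfolding prob_measures_def using sQ
    by (auto simp: Qh N_def intro!: prob_space.prob_space_distr[OF measure_pmf.prob_space_axioms] hm[unfolded N_def])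
  show "P \<in> prob_measures"
    unfolding prob_measures_def using sP prob_space_return[OF zsp] by (auto simp: P_def N_def)
  have hT: "x \<in> T \<Longrightarrow> h x = x" for x using T by (auto simp: h_def)
  show intQ: "(\<integral>x. g x \<partial>Q) = (\<Sum>x\<in>T. pmf p x *\<^sub>R g x)" if gm: "g \<in> borel_measurable N"
    for g :: "real^'d \<Rightarrow> 'b::{banach,second_countable_topology}"
  proof -
    have "(\<integral>x. g x \<partial>Q) = (\<integral>x. g (h x) \<partial>measure_pmf p)" unfolding Qh by (rule integral_distr[OF hm gm])
    also have "\<dots> = (\<Sum>x\<in>T. pmf p x *\<^sub>R g (h x))" by (rule integral_measure_pmf[OF T(1)]) (use T in auto)
    also have "\<dots> = (\<Sum>x\<in>T. pmf p x *\<^sub>R g x)" by (rule sum.cong) (auto simp: hT)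
    finally show ?thesis .
  qed
  show "(\<integral>x. g x \<partial>P) = g z" if gm: "g \<in> borel_measurable N"
    for g :: "real^'d \<Rightarrow> 'b::{banach,second_countable_topology}"
    unfolding P_def by (rule integral_return[OF zsp gm])
  have nnQ: "(\<integral>\<^sup>+x. g x \<partial>Q) = (\<Sum>x\<in>T. g x * pmf p x)" if gm: "g \<in> borel_measurable N" for g
  proof -
    have "(\<integral>\<^sup>+x. g x \<partial>Q) = (\<integral>\<^sup>+x. g (h x) \<partial>measure_pmf p)" unfolding Qh by (rule nn_integral_distr[OF hm]) (use gm in simp)
    also have "\<dots> = (\<Sum>x\<in>T. g (h x) * pmf p x)" by (rule nn_integral_measure_pmf_support[OF T(1)]) (use T in auto)
    also have "\<dots> = (\<Sum>x\<in>T. g x * pmf p x)" by (rule sum.cong) (auto simp: hT)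
    finally show ?thesis .
  qed
  have zT: "z \<in> T" using w T(3) by (auto simp: set_pmf_eq)
  have cubeB: "cube \<inter> space borel \<in> sets borel" by simp
  have zN[measurable]: "{z} \<in> sets N" unfolding N_def using z by (subst sets_restrict_space_iff[OF cubeB]) auto
  define w' where "w' = pmf p z"
  define f where "f x = ennreal (1 / w') * indicator {z} x" for x
  have fm[measurable]: "f \<in> borel_measurable N" unfolding f_def by measurable
  have sumz: "(\<Sum>x\<in>T. (if x = z then c else 0)) = (c::ennreal)" for c using zT T(1) by simp
  have dens: "density Q f = P"
  proof (rule measure_eqI)
    show "sets (density Q f) = sets P" using sQ sP by simp
    fix A assume "A \<in> sets (density Q f)"
    hence A[measurable]: "A \<in> sets N" using sQ by simp
    have fmQ: "f \<in> borel_measurable Q" using fm measurable_cong_sets[OF sQ refl] by blast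
    have "emeasure (density Q f) A = (\<integral>\<^sup>+x. f x * indicator A x \<partial>Q)"
      by (rule emeasure_density[OF fmQ]) (use A sQ in simp)
    also have "\<dots> = (\<Sum>x\<in>T. f x * indicator A x * pmf p x)" by (rule nnQ) measurable
    also have "\<dots> = (\<Sum>x\<in>T. (if x = z then ennreal (1 / w') * indicator A z * ennreal w' else 0))"
      by (rule sum.cong) (auto simp: f_def w'_def)
    also have "\<dots> = ennreal (1 / w') * indicator A z * ennreal w'" by (rule sumz)
    also have "\<dots> = indicator A z"
      using w by (simp add: w'_def ennreal_mult''[symmetric] mult.commute[of _ "ennreal (pmf p z)"] mult.assoc[symmetric])
    also have "\<dots> = emeasure P A" using A by (simp add: P_def)
    finally show "emeasure (density Q f) A = emeasure P A" .
  qed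
  have fmQ: "f \<in> borel_measurable Q" using fm measurable_cong_sets[OF sQ refl] by blast
  interpret Qp: prob_space Q using Qin by (simp add: prob_measures_def)
  have ae: "AE x in Q. f x = RN_deriv Q P x" by (rule Qp.RN_deriv_unique[OF fmQ dens])
  have "emeasure Q {z} = (\<integral>\<^sup>+x. (indicator {z} x :: ennreal) \<partial>Q)" using zN sQ by simp
  also have "\<dots> = (\<Sum>x\<in>T. (indicator {z} x :: ennreal) * ennreal (pmf p x))" by (rule nnQ) measurable
  also have "\<dots> = (\<Sum>x\<in>T. (if x = z then ennreal w' else 0))" by (rule sum.cong) (auto simp: w'_def)
  also have "\<dots> = ennreal w'" by (rule sumz)
  finally have Qz: "emeasure Q {z} = ennreal w'" .
  have RNz: "f z = RN_deriv Q P z"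
  proof (rule ccontr)
    assume nz: "f z \<noteq> RN_deriv Q P z"
    obtain N0 where N0: "{x\<in>space Q. \<not> f x = RN_deriv Q P x} \<subseteq> N0" "emeasure Q N0 = 0" "N0 \<in> sets Q"
      using ae by (rule AE_E)
    have "z \<in> space Q" using sets_eq_imp_space_eq[OF sQ] zsp by simp
    hence "{z} \<subseteq> N0" using N0(1) nz by blast
    hence "emeasure Q {z} \<le> emeasure Q N0" using N0(3) by (rule emeasure_mono)
    thus False using N0(2) Qz w by (simp add: w'_def)
  qed
  hence RNz': "RN_deriv Q P z = ennreal (1 / w')" by (simp add: f_def)
  have ac: "absolutely_continuous Q P" using absolutely_continuousI_density[OF fmQ] dens by simp
  have RNm: "RN_deriv Q P \<in> borel_measurable N"
    using borel_measurable_RN_deriv[of Q P] measurable_cong_sets[OF sQ refl] by blast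
  define l where "l x = ln (enn2real (RN_deriv Q P x))" for x
  have lm: "l \<in> borel_measurable N" unfolding l_def using RNm by measurable
  have lmP: "l \<in> borel_measurable P" using lm measurable_cong_sets[OF sP refl] by blast
  have lz: "l z = - ln w'" using w by (simp add: l_def RNz' w'_def ln_div)
  have "(\<integral>\<^sup>+x. ennreal (norm (l x)) \<partial>P) = ennreal (norm (l z))"
    unfolding P_def by (rule nn_integral_return[OF zsp]) (use lm in measurable)
  hence li: "integrable P l" by (intro integrableI_bounded lmP) simp
  have lint: "(\<integral>x. l x \<partial>P) = - ln w'" unfolding P_def by (subst integral_return[OF zsp lm]) (simp add: lz)
  show "KL P Q = ereal (- ln (pmf p z))"
    using ac li lint unfolding KL_def l_def[abs_def] by (simp add: w'_def)
qed


lemma ereal_abs_bound: fixes a :: ereal assumes "ereal c \<le> a" shows "ereal (c - b) \<le> \<bar>a - ereal b\<bar>"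
  using assms by (cases a) auto

lemma cont_model: "continuous_on cube \<phi> \<Longrightarrow> continuous_on cube (model \<phi> H)"
  unfolding model_def[abs_def] by (intro continuous_intros) auto

theorem theorem23:
  fixes \<phi> :: "real^'d \<Rightarrow> complex^'n"
  assumes "continuous_on cube \<phi>"
  shows "\<exists>z\<in>(cube :: (real^'d) set). \<forall>H \<beta>. hermitian H \<longrightarrow> \<beta> > 0 \<longrightarrow>
    (let f = (\<lambda>x. \<Sum>i\<in>UNIV. cos (2 * pi * (x $ i - z $ i)));
         g = model \<phi> H;
         n = vec.dim (Vlin_gen \<phi>)
     in \<bar>L_opt \<phi> g unif - ereal (Lh (\<lambda>x. \<beta> * f x) unif)\<bar>
        \<ge> ereal (ln (\<beta> powr (real CARD('d) / 2) / (2 * real n + 1))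
                 - (SUP x\<in>cube. \<bar>g x - \<beta> * f x\<bar>)))"
proof -
  note c = assms
  define n where "n = vec.dim (Vlin_gen \<phi>)"
  define M where "M = moment \<phi> (unif :: (real^'d) measure)"
  have Mh: "M \<in> convex hull (Phi \<phi> ` cube)" unfolding M_def by (rule moment_in_hull[OF c])
  obtain p :: "(real^'d) pmf" and T z where pTz: "finite T" "T \<subseteq> cube" "set_pmf p \<subseteq> T"
    "(\<Sum>x\<in>T. pmf p x *\<^sub>R Phi \<phi> x) = M" "z \<in> cube" "1 \<le> pmf p z * (aff_dim (Phi \<phi> ` cube) + 1)"
    using discrete_rep[OF Mh] by blast
  define w where "w = pmf p z"
  have w0: "0 \<le> w" by (simp add: w_def)
  have ad: "real_of_int (aff_dim (Phi \<phi> ` cube) + 1) \<le> 2 * real n + 1"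
    using aff_dim_bound[of \<phi>] unfolding n_def by linarith
  have w1: "1 \<le> w * (2 * real n + 1)"
    using pTz(6) mult_left_mono[OF ad w0] unfolding w_def by linarith
  have wpos: "w > 0" using w1 w0 by (cases "w = 0") auto
  have lnw: "- ln w \<le> ln (2 * real n + 1)"
  proof -
    have "1 / w \<le> 2 * real n + 1" using w1 wpos by (simp add: field_simps)
    hence "ln (1 / w) \<le> ln (2 * real n + 1)" using wpos by simp
    thus ?thesis using wpos by (simp add: ln_div)
  qed
  define N where "N = restrict_space borel (cube :: (real^'d) set)"
  define Q where "Q = distr (measure_pmf p) N (\<lambda>x. if x \<in> cube then x else z)"
  define P where "P = return N z"
  note DQ = discrete_Q[OF pTz(1,2,3,5) wpos[unfolded w_def], folded N_def, folded Q_def P_def]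
  have ij_meas: "(\<lambda>x. Phi \<phi> x $ i $ j) \<in> borel_measurable N" for i j
    unfolding N_def by (rule borel_measurable_continuous_on_restrict) (intro continuous_intros cont_Phi c)
  have momQ: "moment \<phi> Q = M"
  proof -
    have "moment \<phi> Q = (\<chi> i j. \<Sum>x\<in>T. pmf p x *\<^sub>R Phi \<phi> x $ i $ j)"
      unfolding moment_Phi by (simp add: DQ(4)[OF ij_meas])
    also have "\<dots> = (\<Sum>x\<in>T. pmf p x *\<^sub>R Phi \<phi> x)" by (simp add: vec_eq_iff sum_component)
    finally show ?thesis using pTz(4) by simp
  qed
  have KLo: "KL_opt \<phi> (moment \<phi> P) (moment \<phi> unif) \<le> ereal (- ln w)"
  proof -
    have "KL_opt \<phi> (moment \<phi> P) (moment \<phi> unif) \<le> KL (fst (P, Q)) (snd (P, Q))"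
      unfolding KL_opt_def by (rule INF_lower) (use DQ(1,2) momQ M_def in auto)
    thus ?thesis using DQ(3) by (simp add: w_def)
  qed
  show ?thesis
  proof (rule bexI[OF _ pTz(5)], intro allI impI)
    fix H :: "complex^'n^'n" and \<beta> :: real
    assume "hermitian H" and b: "\<beta> > 0"
    define f where "f = (\<lambda>x::real^'d. \<Sum>i\<in>UNIV. cos (2 * pi * (x $ i - z $ i)))"
    define g where "g = model \<phi> H"
    have gc: "continuous_on cube g" unfolding g_def by (rule cont_model[OF c])
    have gm: "g \<in> borel_measurable N" unfolding N_def by (rule borel_measurable_continuous_on_restrict[OF gc])
    have gP: "(\<integral>x. g x \<partial>P) = g z" by (rule DQ(5)[OF gm])
    have Lopt: "ereal (g z + ln w) \<le> L_opt \<phi> g unif"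
    proof -
      have "ereal (g z + ln w) = ereal (\<integral>x. g x \<partial>P) - ereal (- ln w)" by (simp add: gP)
      also have "\<dots> \<le> ereal (\<integral>x. g x \<partial>P) - KL_opt \<phi> (moment \<phi> P) (moment \<phi> unif)"
        by (rule ereal_minus_mono[OF order_refl KLo])
      also have "\<dots> \<le> L_opt \<phi> g unif" unfolding L_opt_def by (rule SUP_upper) (rule DQ(2))
      finally show ?thesis .
    qed
    define S where "S = (SUP x\<in>cube. \<bar>g x - \<beta> * f x\<bar>)"
    have fc: "continuous_on cube (\<lambda>x. \<bar>g x - \<beta> * f x\<bar>)" unfolding f_def by (intro continuous_intros gc)
    have bdd: "bdd_above ((\<lambda>x. \<bar>g x - \<beta> * f x\<bar>) ` cube)"
      using compact_imp_bounded[OF compact_continuous_image[OF fc compact_cube]] by (rule bounded_imp_bdd_above)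
    have "\<bar>g z - \<beta> * f z\<bar> \<le> S" unfolding S_def by (rule cSUP_upper[OF pTz(5) bdd])
    moreover have "f z = real CARD('d)" by (simp add: f_def)
    ultimately have gz: "\<beta> * real CARD('d) - S \<le> g z" by (auto simp: abs_le_iff)
    have Lh: "Lh (\<lambda>x. \<beta> * f x) unif \<le> \<beta> * CARD('d) - (CARD('d)/2) * ln \<beta>"
      unfolding f_def using Lh_bound[OF pTz(5) b] by simp
    have lnr: "ln (\<beta> powr (real CARD('d) / 2) / (2 * real n + 1)) = (real CARD('d) / 2) * ln \<beta> - ln (2 * real n + 1)"
      using b by (simp add: ln_div ln_powr)
    have "ln (\<beta> powr (real CARD('d) / 2) / (2 * real n + 1)) - S \<le> (g z + ln w) - Lh (\<lambda>x. \<beta> * f x) unif"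
      using lnr gz Lh lnw by linarith
    hence "ereal (ln (\<beta> powr (real CARD('d) / 2) / (2 * real n + 1)) - S) \<le> \<bar>L_opt \<phi> g unif - ereal (Lh (\<lambda>x. \<beta> * f x) unif)\<bar>"
      using ereal_abs_bound[OF Lopt, of "Lh (\<lambda>x. \<beta> * f x) unif"] by (meson ereal_less_eq(3) order_trans)
    thus "let f = (\<lambda>x. \<Sum>i\<in>UNIV. cos (2 * pi * (x $ i - z $ i)));
         g = model \<phi> H;
         n = vec.dim (Vlin_gen \<phi>)
     in \<bar>L_opt \<phi> g unif - ereal (Lh (\<lambda>x. \<beta> * f x) unif)\<bar>
        \<ge> ereal (ln (\<beta> powr (real CARD('d) / 2) / (2 * real n + 1))
                 - (SUP x\<in>cube. \<bar>g x - \<beta> * f x\<bar>))"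
      by (simp add: Let_def f_def g_def n_def S_def)
  qed
qed

end
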